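(* Let $\alpha,\beta\in\mathbb{R}$ satisfy $\alpha^2>4$ and $\beta>0$, and let $q_{\alpha,\beta}(w)=w^4+\alpha w^3+(\beta-4)w^2-\alpha w+3$ for $w\in\mathbb{C}$. Then $q_{\alpha,\beta}$ has exactly $2$ roots in the open unit disk $U_1(0)=\{w\in\mathbb{C}:|w|<1\}$, counted with multiplicity. *)

theory Defs
  imports "HOL-Analysis.Analysis" "HOL-Computational_Algebra.Polynomial"
begin

definition q_poly :: "real \<Rightarrow> real \<Rightarrow> complex poly" where
  "q_poly \<alpha> \<beta> = [: 3, - complex_of_real \<alpha>, complex_of_real (\<beta> - 4), complex_of_real \<alpha>, 1 :]"

end

theory Submission imports Defs "HOL-Complex_Analysis.Complex_Analysis" begin

lemma zorder_poly:
  fixes p :: "complex poly"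
  assumes "p \<noteq> 0"
  shows "zorder (poly p) z = int (order z p)"
proof -
  obtain r where r: "p = [:-z,1:] ^ order z p * r" "\<not> [:-z,1:] dvd r"
    using order_decomp[OF assms] by blast
  have "poly r z \<noteq> 0" using r(2) by (simp add: poly_eq_0_iff_dvd)
  show ?thesis
  proof (rule zorder_eqI[where S=UNIV and g="poly r"])
    fix w :: complex
    show "poly p w = poly r w * (w - z) powi int (order z p)"
      by (subst r(1)) (simp add: power_int_of_nat)
  qed (auto simp: \<open>poly r z \<noteq> 0\<close> intro: poly_holomorphic_on)
qed

lemma winding_sum_poly:
  fixes p :: "complex poly"
  assumes "p \<noteq> 0" and nz: "\<And>z. norm z = 1 \<Longrightarrow> poly p z \<noteq> 0"
  shows "(\<Sum>z\<in>{z. poly p z = 0}. winding_number (circlepath 0 1) z * of_int (zorder (poly p) z))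
       = of_nat (\<Sum>z\<in>{z. poly p z = 0 \<and> norm z < 1}. order z p)"
proof -
  have fin: "finite {z. poly p z = 0}" using poly_roots_finite[OF assms(1)] .
  have eq: "winding_number (circlepath 0 1) z * of_int (zorder (poly p) z)
        = (if norm z < 1 then of_nat (order z p) else 0)" if "poly p z = 0" for z
  proof (cases "norm z < 1")
    case True
    then have "winding_number (circlepath 0 1) z = 1"
      by (intro winding_number_circlepath) simp
    then show ?thesis using True zorder_poly[OF assms(1)] by simp
  next
    case False
    with nz[of z] that have "norm z > 1" by fastforce
    have "winding_number (circlepath 0 1) z = 0"
    proof (rule winding_number_zero_outside[where s="cball 0 1"])
      show "path (circlepath 0 1)" by (rule valid_path_imp_path) simp
      show "convex (cball (0::complex) 1)" by simp
      show "pathfinish (circlepath 0 1) = pathstart (circlepath 0 1)" by simp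
      show "z \<notin> cball 0 1" using \<open>norm z > 1\<close> by simp
      show "path_image (circlepath 0 1) \<subseteq> cball 0 1" by (auto simp: sphere_def cball_def)
    qed
    then show ?thesis using False by simp
  qed
  have "(\<Sum>z\<in>{z. poly p z = 0}. winding_number (circlepath 0 1) z * of_int (zorder (poly p) z))
      = (\<Sum>z\<in>{z. poly p z = 0}. (if norm z < 1 then of_nat (order z p) else 0))"
    by (rule sum.cong) (auto simp: eq)
  also have "\<dots> = (\<Sum>z\<in>{z \<in> {z. poly p z = 0}. norm z < 1}. of_nat (order z p))"
    using fin by (rule sum.inter_filter[symmetric])
  also have "{z \<in> {z. poly p z = 0}. norm z < 1} = {z. poly p z = 0 \<and> norm z < 1}" by auto
  finally show ?thesis by simp
qed

lemma polyQ: "poly (q_poly a b) z = z^4 + of_real a * z^3 + of_real (b-4) * z^2 - of_real a * z + 3"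
  by (simp add: q_poly_def algebra_simps eval_nat_numeral)

lemma key_real:
  fixes a b x y B :: real
  assumes "a^2 > 4" "b > 0" "x^2 + y^2 = 1"
    and B: "B = (if a > 0 then 8/(a-2) + (a+2)/2 else -(8/(-a-2) + (-a+2)/2))"
  shows "(-8*y^2)^2 + (2*y*(a - 2*x - B))^2 < b^2 + (2*B*y)^2"
proof -
  define d where "d = a - 2*x"
  have "x^2 \<le> 1" using assms(3) zero_le_power2[of y] by linarith
  then have x1: "\<bar>x\<bar> \<le> 1" by (simp add: abs_square_le_1)
  have y1: "y^2 \<le> 1" using assms(3) zero_le_power2[of x] by linarith
  have dB: "2*d*B \<ge> 16 + d^2"
  proof (cases "a > 0")
    case True
    have "(2::real)^2 < a^2" using assms(1) by simp
    then have a2: "a > 2" using True by (intro power_less_imp_less_base[of 2 2 a]) auto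
    have d1: "d \<ge> a - 2" "d \<le> a + 2" using x1 d_def by auto
    have "d/(a-2) \<ge> 1" using d1 a2 by simp
    then have e1: "16 * (d/(a-2)) \<ge> 16" by simp
    have e2: "d*(a+2) \<ge> d*d" using d1 a2 by (intro mult_left_mono) auto
    have "2*d*B = 16*(d/(a-2)) + d*(a+2)" using a2 by (simp add: B True field_simps)
    then show ?thesis using e1 e2 by (simp add: power2_eq_square)
  next
    case False
    have "(2::real)^2 < (-a)^2" using assms(1) by simp
    then have "-a > 2" using False by (intro power_less_imp_less_base[of 2 2 "-a"]) auto
    then have a2: "a < -2" by simp
    have d1: "-d \<ge> -a - 2" "-d \<le> -a + 2" using x1 d_def by auto
    have "(-d)/(-a-2) \<ge> 1" using d1 a2 by (subst le_divide_eq) auto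
    then have e1: "16 * ((-d)/(-a-2)) \<ge> 16" by simp
    have e2: "(-d)*(-a+2) \<ge> (-d)*(-d)" using d1 a2 by (intro mult_left_mono) auto
    have "2*d*B = 16*((-d)/(-a-2)) + (-d)*(-a+2)" using a2 by (simp add: B False field_simps)
    then show ?thesis using e1 e2 by (simp add: power2_eq_square)
  qed
  have "(-8*y^2)^2 + (2*y*(a - 2*x - B))^2 - (b^2 + (2*B*y)^2) = 4*y^2*(16*y^2 + d^2 - 2*d*B) - b^2"
    by (simp add: d_def power2_eq_square algebra_simps)
  moreover have "4*y^2*(16*y^2 + d^2 - 2*d*B) \<le> 0"
  proof -
    have "16*y^2 + d^2 - 2*d*B \<le> 0" using dB y1 by linarith
    then show ?thesis by (simp add: mult_nonneg_nonpos)
  qed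
  moreover have "b^2 > 0" using assms(2) by simp
  ultimately show ?thesis by linarith
qed

lemma key_complex:
  fixes a b B :: real and z :: complex
  assumes "a^2 > 4" "b > 0" "norm z = 1"
    and B: "B = (if a > 0 then 8/(a-2) + (a+2)/2 else -(8/(-a-2) + (-a+2)/2))"
  shows "cmod (poly (q_poly a b) z - (of_real B * z^3 + of_real b * z^2 - of_real B * z))
         < cmod (of_real B * z^3 + of_real b * z^2 - of_real B * z)"
proof -
  define x y where "x = Re z" and "y = Im z"
  have xy: "x^2 + y^2 = 1" using assms(3) unfolding x_def y_def
    by (metis cmod_power2 power_one)
  have zw: "cnj z * z = 1"
    using assms(3) complex_norm_square[of z] by (simp add: mult.commute)
  define G where "G = z^2 + 3*cnj z^2 + (of_real a - of_real B)*(z - cnj z) - 4"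
  define H where "H = of_real b + of_real B * (z - cnj z)"
  have e1: "poly (q_poly a b) z - (of_real B * z^3 + of_real b * z^2 - of_real B * z) = z^2 * G"
    unfolding polyQ G_def using zw by (simp add: of_real_diff) algebra
  have e2: "of_real B * z^3 + of_real b * z^2 - of_real B * z = z^2 * H"
    unfolding H_def using zw by algebra
  have nG: "cmod G ^ 2 = (4*(x^2-y^2) - 4)^2 + (-4*x*y + 2*(a-B)*y)^2"
    unfolding cmod_power2 G_def x_def y_def by (simp add: power2_eq_square algebra_simps)
  have nH: "cmod H ^ 2 = b^2 + (2*B*y)^2"
    unfolding cmod_power2 H_def x_def y_def by (simp add: power2_eq_square algebra_simps)
  have "(4*(x^2-y^2) - 4)^2 = (-8*y^2)^2"
  proof -
    have "x^2 = 1 - y^2" using xy by simp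
    then show ?thesis by simp
  qed
  moreover have "(-4*x*y + 2*(a-B)*y) = 2*y*(a - 2*x - B)" by (simp add: algebra_simps)
  ultimately have "cmod G ^ 2 < cmod H ^ 2"
    using key_real[OF assms(1,2) xy B] nG nH by simp
  then have "cmod G < cmod H"
    by (rule power_less_imp_less_base) simp
  then have "cmod (z^2*G) < cmod (z^2*H)" by (simp add: norm_mult norm_power assms(3))
  then show ?thesis by (subst e1, subst e2)
qed

lemma lin_order:
  fixes c x :: complex
  shows "order x [:-c,1:] = (if x = c then 1 else 0)"
proof (cases "x = c")
  case True
  then show ?thesis using order_power_n_n[of c 1] by simp
next
  case False
  then show ?thesis by (simp add: order_0I)
qed

lemma lin_nz: "[:-c,1:] \<noteq> (0 :: complex poly)" by simp

lemma ord3: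
  fixes c1 c2 c3 x :: complex
  shows "order x ([:-c1,1:] * [:-c2,1:] * [:-c3,1:]) =
     (if x = c1 then 1 else 0) + (if x = c2 then 1 else 0) + (if x = c3 then 1 else 0)"
proof -
  have nz1: "[:-c1,1:] * [:-c2,1:] \<noteq> 0" by (intro no_zero_divisors lin_nz)
  have nz3: "[:-c1,1:] * [:-c2,1:] * [:-c3,1:] \<noteq> 0" by (intro no_zero_divisors nz1 lin_nz)
  show ?thesis unfolding order_mult[OF nz3] order_mult[OF nz1] lin_order ..
qed

theorem mainTheorem1:
  fixes \<alpha> \<beta> :: real
  assumes "\<alpha>^2 > 4" and "\<beta> > 0"
  shows "(\<Sum>w \<in> {w. poly (q_poly \<alpha> \<beta>) w = 0 \<and> norm w < 1}. order w (q_poly \<alpha> \<beta>)) = 2"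
proof -
  define a b where "a = \<alpha>" and "b = \<beta>"
  have a4: "a^2 > 4" and b0: "b > 0" using assms a_def b_def by auto
  define Q where "Q = q_poly a b"
  define B where "B = (if a > 0 then 8/(a-2) + (a+2)/2 else -(8/(-a-2) + (-a+2)/2))"
  have "B \<noteq> 0"
  proof (cases "a > 0")
    case True
    have "(2::real)^2 < a^2" using a4 by simp
    then have a2: "a > 2" using True by (intro power_less_imp_less_base[of 2 2 a]) auto
    then have "8/(a-2) + (a+2)/2 > 0" by (intro add_pos_pos) auto
    then show ?thesis using True B_def by simp
  next
    case False
    have "(2::real)^2 < (-a)^2" using a4 by simp
    then have "-a > 2" using False by (intro power_less_imp_less_base[of 2 2 "-a"]) auto
    then have "8/(-a-2) + (-a+2)/2 > 0" by (intro add_pos_pos) auto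
    moreover have "B = -(8/(-a-2) + (-a+2)/2)" using False B_def by simp
    ultimately show ?thesis by linarith
  qed
  define sq where "sq = sqrt (b^2 + 4*B^2)"
  define r where "r = (sq - b) / (2*B)"
  have sq2: "sq^2 = b^2 + 4*B^2" unfolding sq_def by simp
  have sqb: "sq > b" unfolding sq_def using \<open>B \<noteq> 0\<close> b0 by (intro real_less_rsqrt) simp
  have sqb2: "sq < b + 2*\<bar>B\<bar>"
  proof -
    have p: "b * \<bar>B\<bar> > 0" using \<open>B \<noteq> 0\<close> b0 by simp
    have "(b + 2*\<bar>B\<bar>)^2 = b^2 + 4*B^2 + 4*(b*\<bar>B\<bar>)"
      by (simp add: power2_eq_square algebra_simps abs_mult_self_eq)
    then have "b^2 + 4*B^2 < (b + 2*\<bar>B\<bar>)^2" using p by linarith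
    then have "sqrt (b^2 + 4*B^2) < sqrt ((b + 2*\<bar>B\<bar>)^2)" by (rule real_sqrt_less_mono)
    then show ?thesis unfolding sq_def using b0 by simp
  qed
  have r0: "r \<noteq> 0" unfolding r_def using sqb \<open>B \<noteq> 0\<close> by simp
  have r1: "\<bar>r\<bar> < 1"
  proof -
    have "\<bar>r\<bar> = (sq - b) / (2*\<bar>B\<bar>)" unfolding r_def using sqb by (simp add: abs_divide)
    also have "\<dots> < 1" using sqb2 \<open>B \<noteq> 0\<close> by (simp add: divide_less_eq)
    finally show ?thesis .
  qed
  have quad: "B * r^2 + b * r - B = 0"
  proof -
    have "B * r^2 + b * r - B = (sq^2 - b^2 - 4*B^2) / (4*B)"
      unfolding r_def using \<open>B \<noteq> 0\<close> by (simp add: field_simps power2_eq_square)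
    then show ?thesis using sq2 by simp
  qed
  have hb: "b = B * (1/r - r)"
  proof -
    have "b * r = B - B * r^2" using quad by simp
    then show ?thesis using r0 by (simp add: field_simps power2_eq_square)
  qed
  define F :: "complex poly" where "F = smult (of_real B) ([:-0,1:] * [:-of_real r,1:] * [:-of_real (-1/r),1:])"
  have hbc: "(of_real B * (1/of_real r - of_real r) :: complex) = of_real b"
    using hb by simp
  have polyF': "poly F z = of_real B * z * (z - of_real r) * (z + 1/of_real r)" for z
    unfolding F_def by (simp add: algebra_simps)
  have polyF: "poly F z = of_real B * z^3 + of_real b * z^2 - of_real B * z" for z
  proof -
    have "poly F z = of_real B * z * (z - of_real r) * (z + 1/of_real r)"
      unfolding F_def by (simp add: algebra_simps)
    also have "\<dots> = of_real B * z^3 + (of_real B * (1/of_real r - of_real r)) * z^2 - of_real B * z"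
      using r0 by (simp add: field_simps power2_eq_square power3_eq_cube)
    finally show ?thesis unfolding hbc .
  qed
  have key: "cmod (poly Q z - poly F z) < cmod (poly F z)" if "norm z = 1" for z
    unfolding Q_def polyF using key_complex[OF a4 b0 that B_def] .
  have nzQ: "poly Q z \<noteq> 0" if "norm z = 1" for z
    using key[OF that] by auto
  have nzF: "poly F z \<noteq> 0" if "norm z = 1" for z
    using key[OF that] by auto
  have Q0: "Q \<noteq> 0" using nzQ[of 1] by auto
  have F0: "F \<noteq> 0" using nzF[of 1] by auto
  have R: "(\<Sum>p\<in>{p\<in>UNIV. poly F p + (poly Q p - poly F p) = 0}. winding_number (circlepath 0 1) p
             * of_int (zorder (\<lambda>p. poly F p + (poly Q p - poly F p)) p))
        = (\<Sum>p\<in>{p\<in>UNIV. poly F p = 0}. winding_number (circlepath 0 1) p * of_int (zorder (poly F) p))"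
  proof (rule Rouche_theorem)
    show "finite {p \<in> UNIV. poly F p + (poly Q p - poly F p) = 0}"
      using poly_roots_finite[OF Q0] by simp
    show "finite {p \<in> UNIV. poly F p = 0}"
      using poly_roots_finite[OF F0] by simp
    show "poly F holomorphic_on UNIV" using poly_holomorphic_on[OF holomorphic_on_ident] by simp
    show "(\<lambda>p. poly Q p - poly F p) holomorphic_on UNIV"
      by (intro holomorphic_intros holomorphic_on_ident)
    show "\<forall>z\<in>path_image (circlepath 0 1). cmod (poly Q z - poly F z) < cmod (poly F z)"
      using key by (auto simp: sphere_def)
  qed auto
  have "(\<lambda>p. poly F p + (poly Q p - poly F p)) = poly Q" by auto
  with R have R2: "(\<Sum>p\<in>{p. poly Q p = 0}. winding_number (circlepath 0 1) p * of_int (zorder (poly Q) p))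
        = (\<Sum>p\<in>{p. poly F p = 0}. winding_number (circlepath 0 1) p * of_int (zorder (poly F) p))"
    by simp
  have SF: "(\<Sum>z\<in>{z. poly F z = 0 \<and> norm z < 1}. order z F) = 2"
  proof -
    have set: "{z. poly F z = 0 \<and> norm z < 1} = {0, of_real r}"
    proof -
      have "poly F z = 0 \<longleftrightarrow> z = 0 \<or> z = of_real r \<or> z = - (1 / of_real r)" for z
        unfolding polyF' using \<open>B \<noteq> 0\<close> by (simp add: add_eq_0_iff2)
      moreover have "norm (- (1 / (of_real r :: complex))) > 1"
      proof -
        have e: "norm (- (1 / (of_real r :: complex))) = 1 / \<bar>r\<bar>" by (simp add: norm_divide)
        have "1 < 1 / \<bar>r\<bar>" using r1 r0 by (simp add: less_divide_eq)
        then show ?thesis unfolding e .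
      qed
      ultimately show ?thesis using r1 by (auto simp: norm_divide)
    qed
    have Bc: "(of_real B :: complex) \<noteq> 0" using \<open>B \<noteq> 0\<close> by simp
    have ord: "order x F = (if x = 0 then 1 else 0) + (if x = of_real r then 1 else 0)
                 + (if x = of_real (-1/r) then 1 else 0)" for x
      unfolding F_def order_smult[OF Bc] ord3 ..
    have "0 \<noteq> (of_real r :: complex)" using r0 by simp
    moreover have "(of_real r :: complex) \<noteq> of_real (-1/r)"
    proof
      assume "(of_real r :: complex) = of_real (-1/r)"
      then have "r = -1/r" by (simp only: of_real_eq_iff)
      then have "r * r = -1" using r0 by (simp add: field_simps)
      then show False by (smt (verit) zero_le_square)
    qed
    moreover have "(0 :: complex) \<noteq> of_real (-1/r)" using r0 by simp
    ultimately show ?thesis unfolding set using r0 by (simp add: ord)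
  qed
  have "of_nat (\<Sum>z\<in>{z. poly Q z = 0 \<and> norm z < 1}. order z Q)
      = (of_nat (\<Sum>z\<in>{z. poly F z = 0 \<and> norm z < 1}. order z F) :: complex)"
    using R2 winding_sum_poly[OF Q0 nzQ] winding_sum_poly[OF F0 nzF] by simp
  then have "(\<Sum>z\<in>{z. poly Q z = 0 \<and> norm z < 1}. order z Q) = 2"
    using SF by (simp only: of_nat_eq_iff)
  then show ?thesis unfolding Q_def a_def b_def .
qed

end
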